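(* Let $\frac\pi4\le\gamma_1\le\frac\pi2$ and $\gamma_2=\frac\pi2-\gamma_1$, and for $x_3\in[-1,1]$ let $\rho(x_3)=\frac12(\Sigma_0+x_3\Sigma_3)$. Then $$\min_{x_3\in[-1,1]} g(\rho(x_3))=\frac{[1+\cos(2\gamma_1)+\sqrt2\sin\gamma_1]^2}{[3+\cos(2\gamma_1)]^2},$$ attained at $x_3=\frac{2\sin\gamma_1(\sin\gamma_1-\sqrt2)}{3+\cos(2\gamma_1)}$; this minimum value is increasing in $\gamma_1$ on $[\frac\pi4,\frac\pi2]$, so its smallest value $\frac49$ occurs at $\gamma_1=\frac\pi4$, $x_3=-\frac13$.
   Context: On two qubits, let $\sigma_1,\sigma_2,\sigma_3$ denote the Pauli matrices acting on the first qubit and $\tau_1,\tau_2,\tau_3$ those acting on the second qubit. For parameters $\gamma_1,\gamma_2$ set $u=\cos\gamma_1\cos\gamma_2$, $v=\sin\gamma_1\sin\gamma_2$, $z_1=\sin\gamma_1\cos\gamma_2$, $z_2=\cos\gamma_1\sin\gamma_2$, and define $\Sigma_0=\frac12(I+u\sigma_3+v\tau_3+z_1\sigma_1\tau_1+z_2\sigma_2\tau_2)$ and $\Sigma_3=\frac12(v\sigma_3+u\tau_3-z_2\sigma_1\tau_1-z_1\sigma_2\tau_2+\sigma_3\tau_3)$. For a two-qubit density matrix $\rho$, $g(\rho):=\max\operatorname{tr}[\rho(\rho_1\otimes\rho_2)]$ over all pure single-qubit states $\rho_1,\rho_2$. *)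

theory Defs
  imports "Jordan_Normal_Form.Matrix" "Jordan_Normal_Form.Conjugate"
begin

text \<open>Kronecker (tensor) product of matrices; the first factor acts on the first qubit
  (most significant index).\<close>
definition kron :: "complex mat \<Rightarrow> complex mat \<Rightarrow> complex mat" where
  "kron A B = mat (dim_row A * dim_row B) (dim_col A * dim_col B)
     (\<lambda>(i,j). A $$ (i div dim_row B, j div dim_col B) * B $$ (i mod dim_row B, j mod dim_col B))"

definition pauliX :: "complex mat" where
  "pauliX = mat_of_rows_list 2 [[0, 1], [1, 0]]"
definition pauliY :: "complex mat" where
  "pauliY = mat_of_rows_list 2 [[0, -\<i>], [\<i>, 0]]"
definition pauliZ :: "complex mat" where
  "pauliZ = mat_of_rows_list 2 [[1, 0], [0, -1]]"

definition sigma :: "nat \<Rightarrow> complex mat" where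
  "sigma k = kron (if k = 1 then pauliX else if k = 2 then pauliY else pauliZ) (1\<^sub>m 2)"
definition tau :: "nat \<Rightarrow> complex mat" where
  "tau k = kron (1\<^sub>m 2) (if k = 1 then pauliX else if k = 2 then pauliY else pauliZ)"

definition Sigma0 :: "real \<Rightarrow> real \<Rightarrow> complex mat" where
  "Sigma0 g1 g2 = (let u = cos g1 * cos g2; v = sin g1 * sin g2;
                       z1 = sin g1 * cos g2; z2 = cos g1 * sin g2 in
     (1/2 :: complex) \<cdot>\<^sub>m (1\<^sub>m 4 + complex_of_real u \<cdot>\<^sub>m sigma 3 + complex_of_real v \<cdot>\<^sub>m tau 3
        + complex_of_real z1 \<cdot>\<^sub>m (sigma 1 * tau 1) + complex_of_real z2 \<cdot>\<^sub>m (sigma 2 * tau 2)))"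

definition Sigma3 :: "real \<Rightarrow> real \<Rightarrow> complex mat" where
  "Sigma3 g1 g2 = (let u = cos g1 * cos g2; v = sin g1 * sin g2;
                       z1 = sin g1 * cos g2; z2 = cos g1 * sin g2 in
     (1/2 :: complex) \<cdot>\<^sub>m (complex_of_real v \<cdot>\<^sub>m sigma 3 + complex_of_real u \<cdot>\<^sub>m tau 3
        + complex_of_real (- z2) \<cdot>\<^sub>m (sigma 1 * tau 1) + complex_of_real (- z1) \<cdot>\<^sub>m (sigma 2 * tau 2)
        + sigma 3 * tau 3))"

definition pure_qubit_state :: "complex mat \<Rightarrow> bool" where
  "pure_qubit_state P \<longleftrightarrow> (\<exists>\<psi>::complex vec. \<psi> \<in> carrier_vec 2 \<and>
       (\<Sum>i<2. (cmod (\<psi> $ i))\<^sup>2) = 1 \<and>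
       P = mat 2 2 (\<lambda>(i,j). \<psi> $ i * cnj (\<psi> $ j)))"

text \<open>g(rho) = max tr[rho (rho1 (x) rho2)] over pure product states (the trace is real for
  Hermitian rho; we take the real part; the maximum exists by compactness and equals the supremum).\<close>
definition mtrace :: "complex mat \<Rightarrow> complex" where
  "mtrace A = (\<Sum>i<dim_row A. A $$ (i, i))"

definition gmax :: "complex mat \<Rightarrow> real" where
  "gmax \<rho> = (SUP PQ \<in> {(P, Q). pure_qubit_state P \<and> pure_qubit_state Q}.
               Re (mtrace (\<rho> * kron (fst PQ) (snd PQ))))"

definition rho_x3 :: "real \<Rightarrow> real \<Rightarrow> real \<Rightarrow> complex mat" where
  "rho_x3 g1 g2 x3 = (1/2 :: complex) \<cdot>\<^sub>m (Sigma0 g1 g2 + complex_of_real x3 \<cdot>\<^sub>m Sigma3 g1 g2)"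

end

theory Submission
  imports Defs
begin

lemma sum4: "(\<Sum>i = 0..<4. f i) = f (0::nat) + f 1 + f 2 + (f 3 :: 'a::comm_monoid_add)"
  by (simp add: eval_nat_numeral)
lemma sum4': "(\<Sum>i <4. f i) = f (0::nat) + f 1 + f 2 + (f 3 :: 'a::comm_monoid_add)"
  by (simp add: eval_nat_numeral)

lemma eq_mat4I:
  assumes "dim_row A = 4" "dim_col A = 4" "dim_row B = 4" "dim_col B = 4"
   "\<And>i j. i \<in> {0,1,2,3::nat} \<Longrightarrow> j \<in> {0,1,2,3} \<Longrightarrow> A$$(i,j) = B$$(i,j)"
  shows "A = B"
proof (rule eq_matI)
  fix i j assume "i < dim_row B" "j < dim_col B"
  then have "i \<in> {0,1,2,3}" "j \<in> {0,1,2,3}" using assms by auto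
  then show "A$$(i,j) = B$$(i,j)" using assms by blast
qed (use assms in auto)

lemma pX: "pauliX = mat 2 2 (\<lambda>(i,j). [[0,1],[1,0]]!i!j)" by (simp add: pauliX_def mat_of_rows_list_def numeral_2_eq_2)
lemma pY: "pauliY = mat 2 2 (\<lambda>(i,j). [[0,-\<i>],[\<i>,0]]!i!j)" by (simp add: pauliY_def mat_of_rows_list_def numeral_2_eq_2)
lemma pZ: "pauliZ = mat 2 2 (\<lambda>(i,j). [[1,0],[0,-1]]!i!j)" by (simp add: pauliZ_def mat_of_rows_list_def numeral_2_eq_2)

definition M4 :: "complex list list \<Rightarrow> complex mat" where "M4 l = mat_of_rows_list 4 l"

lemma s1: "sigma 1 = M4 [[0,0,1,0],[0,0,0,1],[1,0,0,0],[0,1,0,0]]"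
  by (rule eq_mat4I) (auto simp: M4_def sigma_def kron_def pX mat_of_rows_list_def)
lemma s2: "sigma 2 = M4 [[0,0,-\<i>,0],[0,0,0,-\<i>],[\<i>,0,0,0],[0,\<i>,0,0]]"
  by (rule eq_mat4I) (auto simp: M4_def sigma_def kron_def pY mat_of_rows_list_def)
lemma s3: "sigma 3 = M4 [[1,0,0,0],[0,1,0,0],[0,0,-1,0],[0,0,0,-1]]"
  by (rule eq_mat4I) (auto simp: M4_def sigma_def kron_def pZ mat_of_rows_list_def)
lemma t1: "tau 1 = M4 [[0,1,0,0],[1,0,0,0],[0,0,0,1],[0,0,1,0]]"
  by (rule eq_mat4I) (auto simp: M4_def tau_def kron_def pX mat_of_rows_list_def)
lemma t2: "tau 2 = M4 [[0,-\<i>,0,0],[\<i>,0,0,0],[0,0,0,-\<i>],[0,0,\<i>,0]]"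
  by (rule eq_mat4I) (auto simp: M4_def tau_def kron_def pY mat_of_rows_list_def)
lemma t3: "tau 3 = M4 [[1,0,0,0],[0,-1,0,0],[0,0,1,0],[0,0,0,-1]]"
  by (rule eq_mat4I) (auto simp: M4_def tau_def kron_def pZ mat_of_rows_list_def)

lemma M4_mult: "length a = 4 \<Longrightarrow> length b = 4 \<Longrightarrow> (\<forall>r\<in>set a. length r = 4) \<Longrightarrow> (\<forall>r\<in>set b. length r = 4) \<Longrightarrow>
  M4 a * M4 b = mat 4 4 (\<lambda>(i,j). \<Sum>k<4. a!i!k * b!k!j)"
  by (rule eq_matI) (auto simp: M4_def mat_of_rows_list_def scalar_prod_def row_def col_def lessThan_atLeast0)

lemma st1: "sigma 1 * tau 1 = M4 [[0,0,0,1],[0,0,1,0],[0,1,0,0],[1,0,0,0]]"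
  unfolding s1 t1 by (subst M4_mult, simp_all, rule eq_mat4I) (auto simp: M4_def mat_of_rows_list_def sum4')
lemma st2: "sigma 2 * tau 2 = M4 [[0,0,0,-1],[0,0,1,0],[0,1,0,0],[-1,0,0,0]]"
  unfolding s2 t2 by (subst M4_mult, simp_all, rule eq_mat4I) (auto simp: M4_def mat_of_rows_list_def sum4')
lemma st3: "sigma 3 * tau 3 = M4 [[1,0,0,0],[0,-1,0,0],[0,0,-1,0],[0,0,0,1]]"
  unfolding s3 t3 by (subst M4_mult, simp_all, rule eq_mat4I) (auto simp: M4_def mat_of_rows_list_def sum4')

definition pp :: "real \<Rightarrow> real \<Rightarrow> real \<Rightarrow> real" where "pp g1 g2 x = cos g1 * cos g2 + x * (sin g1 * sin g2)"
definition qq :: "real \<Rightarrow> real \<Rightarrow> real \<Rightarrow> real" where "qq g1 g2 x = sin g1 * sin g2 + x * (cos g1 * cos g2)"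
definition AA :: "real \<Rightarrow> real \<Rightarrow> real \<Rightarrow> real" where "AA g1 g2 x = sin g1 * cos g2 - x * (cos g1 * sin g2)"
definition BB :: "real \<Rightarrow> real \<Rightarrow> real \<Rightarrow> real" where "BB g1 g2 x = cos g1 * sin g2 - x * (sin g1 * cos g2)"

lemma rho_eq: "rho_x3 g1 g2 x = (let p = pp g1 g2 x; q = qq g1 g2 x; A = AA g1 g2 x; B = BB g1 g2 x in
   M4 [[of_real ((1+p+q+x)/4), 0, 0, of_real ((A-B)/4)],
       [0, of_real ((1+p-q-x)/4), of_real ((A+B)/4), 0],
       [0, of_real ((A+B)/4), of_real ((1-p+q-x)/4), 0],
       [of_real ((A-B)/4), 0, 0, of_real ((1-p-q+x)/4)]])"
  unfolding rho_x3_def Sigma0_def Sigma3_def Let_def st1 st2 st3 unfolding s3 t3 pp_def qq_def AA_def BB_def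
  by (rule eq_mat4I) (auto simp: M4_def mat_of_rows_list_def algebra_simps)

definition proj :: "(nat \<Rightarrow> complex) \<Rightarrow> complex mat" where
  "proj f = mat 2 2 (\<lambda>(i,j). f i * cnj (f j))"

lemma kron_proj: "kron (proj f) (proj g) = (let w = [f 0 * g 0, f 0 * g 1, f 1 * g 0, f 1 * g 1] in
   M4 [[w!0 * cnj (w!0), w!0 * cnj (w!1), w!0 * cnj (w!2), w!0 * cnj (w!3)],
       [w!1 * cnj (w!0), w!1 * cnj (w!1), w!1 * cnj (w!2), w!1 * cnj (w!3)],
       [w!2 * cnj (w!0), w!2 * cnj (w!1), w!2 * cnj (w!2), w!2 * cnj (w!3)],
       [w!3 * cnj (w!0), w!3 * cnj (w!1), w!3 * cnj (w!2), w!3 * cnj (w!3)]])"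
  unfolding Let_def by (rule eq_mat4I) (auto simp: M4_def mat_of_rows_list_def proj_def kron_def)

lemma trace_val:
  "Re (mtrace (rho_x3 g1 g2 x * kron (proj f) (proj g))) =
    ((1 + pp g1 g2 x + qq g1 g2 x + x) * (cmod (f 0))\<^sup>2 * (cmod (g 0))\<^sup>2
   + (1 + pp g1 g2 x - qq g1 g2 x - x) * (cmod (f 0))\<^sup>2 * (cmod (g 1))\<^sup>2
   + (1 - pp g1 g2 x + qq g1 g2 x - x) * (cmod (f 1))\<^sup>2 * (cmod (g 0))\<^sup>2
   + (1 - pp g1 g2 x - qq g1 g2 x + x) * (cmod (f 1))\<^sup>2 * (cmod (g 1))\<^sup>2
   + AA g1 g2 x * (2 * Re (cnj (f 0) * f 1)) * (2 * Re (cnj (g 0) * g 1))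
   + BB g1 g2 x * (2 * Im (cnj (f 0) * f 1)) * (2 * Im (cnj (g 0) * g 1))) / 4"
  unfolding rho_eq kron_proj Let_def
  apply (subst M4_mult, simp_all)
  apply (simp add: mtrace_def sum4' cmod_power2)
  apply (simp add: algebra_simps power2_eq_square)
  done

lemma core:
  fixes a1 a2 a3 b1 b2 b3 e A B x :: real
  shows "A + e\<^sup>2*(A-x) - (e*(A-x)*(a3+b3) + A*a1*b1 + B*a2*b2 + x*a3*b3) =
    (A-x)*((a3+b3)/2 - e)\<^sup>2 + (A-B)*((a2+b2)/2)\<^sup>2 + 2*A*((a1-b1)/2)\<^sup>2 + (A+B)*((a2-b2)/2)\<^sup>2
    + (A+x)*((a3-b3)/2)\<^sup>2 + A*(1 - (a1\<^sup>2+a2\<^sup>2+a3\<^sup>2+b1\<^sup>2+b2\<^sup>2+b3\<^sup>2)/2)"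
  by (simp add: field_simps power2_eq_square)

lemma bound:
  fixes a1 a2 a3 b1 b2 b3 m A B x :: real
  assumes "a1\<^sup>2+a2\<^sup>2+a3\<^sup>2+b1\<^sup>2+b2\<^sup>2+b3\<^sup>2 = 2" "B \<le> A" "0 \<le> A+B" "0 \<le> A+x" "0 < A - x"
  shows "m*(a3+b3) + A*a1*b1 + B*a2*b2 + x*a3*b3 \<le> A + m\<^sup>2/(A-x)"
proof -
  define e where "e = m/(A-x)"
  have me: "m = e*(A-x)" using assms(5) unfolding e_def by simp
  have m2: "m\<^sup>2/(A-x) = e\<^sup>2*(A-x)" using assms(5) unfolding me by (simp add: power2_eq_square)
  have "0 \<le> (A-x)*((a3+b3)/2 - e)\<^sup>2 + (A-B)*((a2+b2)/2)\<^sup>2 + 2*A*((a1-b1)/2)\<^sup>2 + (A+B)*((a2-b2)/2)\<^sup>2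
    + (A+x)*((a3-b3)/2)\<^sup>2 + A*(1 - (a1\<^sup>2+a2\<^sup>2+a3\<^sup>2+b1\<^sup>2+b2\<^sup>2+b3\<^sup>2)/2)"
  proof -
    have "0 \<le> A" using assms by linarith
    have "1 - (a1\<^sup>2+a2\<^sup>2+a3\<^sup>2+b1\<^sup>2+b2\<^sup>2+b3\<^sup>2)/2 = 0" using assms(1) by simp
    moreover have "0 \<le> (A-x)*((a3+b3)/2 - e)\<^sup>2" using assms by simp
    moreover have "0 \<le> (A-B)*((a2+b2)/2)\<^sup>2" using assms by simp
    moreover have "0 \<le> 2*A*((a1-b1)/2)\<^sup>2" using \<open>0 \<le> A\<close> by simp
    moreover have "0 \<le> (A+B)*((a2-b2)/2)\<^sup>2" using assms by simp
    moreover have "0 \<le> (A+x)*((a3-b3)/2)\<^sup>2" using assms by simp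
    ultimately show ?thesis by simp
  qed
  moreover have "m*(a3+b3) = e*(A-x)*(a3+b3)" using me by simp
  ultimately show ?thesis using core[of A e x a3 b3 a1 b1 B a2 b2] unfolding m2 by linarith
qed

locale sc =
  fixes s c r :: real
  assumes h1: "s\<^sup>2 + c\<^sup>2 = 1" and h2: "r\<^sup>2 = 2" and h3: "0 < r" and h4: "0 < s" and h5: "s \<le> 1"
    and h6: "0 \<le> c" and h7: "1 \<le> 2*s\<^sup>2"
begin

definition "D = 2 - s\<^sup>2"
definition "xs = 2*s*(s-r)/(4 - 2*s\<^sup>2)"
definition "V = (2 - 2*s\<^sup>2 + r*s)\<^sup>2/(4 - 2*s\<^sup>2)\<^sup>2"
definition "tt = c*(r-s)/(2-s\<^sup>2)"

lemma D_pos: "1 \<le> D"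
proof -
  have "s\<^sup>2 \<le> 1" using h4 h5 by (simp add: power_le_one)
  then show ?thesis unfolding D_def by simp
qed

lemma r_bounds: "1 < r" "r < 2"
proof -
  show "1 < r"
  proof (rule ccontr)
    assume "\<not> 1 < r" then have "r*r \<le> 1" using h3 by (simp add: mult_le_one)
    then show False using h2 by (simp add: power2_eq_square)
  qed
  show "r < 2"
  proof (rule ccontr)
    assume "\<not> r < 2" then have "2*2 \<le> r*r" by (intro mult_mono) auto
    then show False using h2 by (simp add: power2_eq_square)
  qed
qed

lemma xs_eq: "xs = s*(s-r)/D"
proof -
  have "4 - 2*s\<^sup>2 = 2*D" unfolding D_def by simp
  then show ?thesis unfolding xs_def by simp
qed

lemma xs_range: "-1 \<le> xs" "xs \<le> 1" "xs \<le> 0"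
proof -
  have D: "0 < D" using D_pos by simp
  have "s*(s-r) \<le> 0" using h4 h5 r_bounds by (simp add: mult_nonneg_nonpos)
  then show "xs \<le> 0" "xs \<le> 1" unfolding xs_eq using D by (auto simp: divide_nonpos_pos)
  have "r*s \<le> r" using h5 h3 by simp
  then have "-D \<le> s*(s-r)" unfolding D_def using r_bounds
    by (simp only: algebra_simps power2_eq_square)
  then show "-1 \<le> xs" unfolding xs_eq using D by (simp add: field_simps)
qed

lemma A_minus: "(s\<^sup>2 - xs*c\<^sup>2) - xs = r*s"
proof -
  have c2: "c\<^sup>2 = 1 - s\<^sup>2" using h1 by simp
  have "xs*D = s*(s-r)" unfolding xs_eq using D_pos by simp
  then show ?thesis unfolding c2 D_def by (simp add: algebra_simps power2_eq_square)
qed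

lemma V_eq: "4*V = (2*c\<^sup>2+r*s)\<^sup>2/D\<^sup>2"
proof -
  have a: "2-2*s\<^sup>2+r*s = 2*c\<^sup>2+r*s" using h1 by simp
  have b: "4-2*s\<^sup>2 = 2*D" unfolding D_def by simp
  show ?thesis unfolding V_def a b by (simp add: power_mult_distrib)
qed

lemma K_eq: "1 + (s\<^sup>2 - xs*c\<^sup>2) + (s*c*(1+xs))\<^sup>2/(r*s) = 4*V"
proof -
  have D: "D \<noteq> 0" using D_pos by simp
  have idc: "D\<^sup>2 + s\<^sup>2*D\<^sup>2 - s*(s-r)*c\<^sup>2*D + s*c\<^sup>2*r*(r-s)\<^sup>2 = (2*c\<^sup>2+r*s)\<^sup>2"
    unfolding D_def using h1 h2 by Groebner_Basis.algebra
  have ox: "1 + xs = r*(r-s)/D" unfolding xs_eq using D h2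
    by (simp add: field_simps D_def algebra_simps power2_eq_square)
  have "1 + (s\<^sup>2 - xs*c\<^sup>2) + (s*c*(1+xs))\<^sup>2/(r*s) =
        (D\<^sup>2 + s\<^sup>2*D\<^sup>2 - s*(s-r)*c\<^sup>2*D + s*c\<^sup>2*r*(r-s)\<^sup>2)/D\<^sup>2"
    unfolding ox unfolding xs_eq using D h3 h4 h2 by (simp add: field_simps power2_eq_square) Groebner_Basis.algebra
  then show ?thesis unfolding V_eq idc .
qed

lemma conds: assumes "-1 \<le> x" "x \<le> 1"
  shows "c\<^sup>2 - x*s\<^sup>2 \<le> s\<^sup>2 - x*c\<^sup>2" "0 \<le> (s\<^sup>2 - x*c\<^sup>2) + (c\<^sup>2 - x*s\<^sup>2)"
    "0 \<le> (s\<^sup>2 - x*c\<^sup>2) + x"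
proof -
  have "0 \<le> (s\<^sup>2 - c\<^sup>2)*(1+x)" using h1 h7 assms by simp
  then show "c\<^sup>2 - x*s\<^sup>2 \<le> s\<^sup>2 - x*c\<^sup>2" by (simp add: algebra_simps)
  have "(s\<^sup>2 - x*c\<^sup>2) + (c\<^sup>2 - x*s\<^sup>2) = (s\<^sup>2+c\<^sup>2)*(1-x)" by (simp add: algebra_simps)
  then show "0 \<le> (s\<^sup>2 - x*c\<^sup>2) + (c\<^sup>2 - x*s\<^sup>2)" using h1 assms by simp
  have "0 \<le> s\<^sup>2*(1+x)" using assms by simp
  moreover have "(s\<^sup>2 - x*c\<^sup>2) + x = s\<^sup>2*(1+x) + x*(1 - (s\<^sup>2+c\<^sup>2))" by (simp add: algebra_simps)
  ultimately show "0 \<le> (s\<^sup>2 - x*c\<^sup>2) + x" using h1 by simp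
qed

lemma tt_range: "-1 \<le> tt" "tt \<le> 1"
proof -
  have D: "0 < D" using D_pos by simp
  have tD: "tt = c*(r-s)/D" unfolding tt_def D_def by simp
  have "0 \<le> c*(r-s)" using h6 r_bounds h5 by simp
  then have "0 \<le> c*(r-s)/D" using D by simp
  then show "-1 \<le> tt" unfolding tD by linarith
  have "c*(r-s) \<le> c*r" using h6 h4 by (simp add: mult_left_mono)
  also have "c*r \<le> D"
  proof -
    have "0 \<le> (c - r/2)\<^sup>2 + 1/2" by simp
    also have "(c - r/2)\<^sup>2 + 1/2 = D - c*r" unfolding D_def using h1 h2
      by Groebner_Basis.algebra
    finally show ?thesis by simp
  qed
  finally show "tt \<le> 1" unfolding tD using D by simp
qed

lemma witness_val: "1 + 2*(s*c*(1+x))*tt + (s\<^sup>2 - x*c\<^sup>2)*(1-tt\<^sup>2) + x*tt\<^sup>2 = 4*V"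
proof -
  have D: "D \<noteq> 0" using D_pos by simp
  have tD: "tt = c*(r-s)/D" unfolding tt_def D_def by simp
  define N where "N = c*(r-s)"
  have e1: "2*s*c*N*D - c\<^sup>2*(D\<^sup>2 - N\<^sup>2) + N\<^sup>2 = 0" unfolding N_def D_def using h1 h2 by Groebner_Basis.algebra
  have e2: "D\<^sup>2 + 2*s*c*N*D + s\<^sup>2*(D\<^sup>2-N\<^sup>2) = (2*c\<^sup>2+r*s)\<^sup>2" unfolding N_def D_def using h1 h2 by Groebner_Basis.algebra
  have "1 + 2*(s*c*(1+x))*tt + (s\<^sup>2 - x*c\<^sup>2)*(1-tt\<^sup>2) + x*tt\<^sup>2 =
     ((D\<^sup>2 + 2*s*c*N*D + s\<^sup>2*(D\<^sup>2-N\<^sup>2)) + x*(2*s*c*N*D - c\<^sup>2*(D\<^sup>2 - N\<^sup>2) + N\<^sup>2))/D\<^sup>2"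
    unfolding tD N_def[symmetric] using D by (simp add: field_simps power2_eq_square)
  then show ?thesis unfolding e1 e2 V_eq by simp
qed

end

definition bl1 :: "(nat \<Rightarrow> complex) \<Rightarrow> real" where "bl1 f = 2 * Re (cnj (f 0) * f 1)"
definition bl2 :: "(nat \<Rightarrow> complex) \<Rightarrow> real" where "bl2 f = 2 * Im (cnj (f 0) * f 1)"
definition bl3 :: "(nat \<Rightarrow> complex) \<Rightarrow> real" where "bl3 f = (cmod (f 0))\<^sup>2 - (cmod (f 1))\<^sup>2"

definition Fv :: "real \<Rightarrow> real \<Rightarrow> real \<Rightarrow> real \<Rightarrow> real \<Rightarrow> real \<Rightarrow> real \<Rightarrow> real \<Rightarrow> real" where
  "Fv g1 x a1 a2 a3 b1 b2 b3 = (1 + (sin g1 * cos g1 * (1+x))*(a3+b3) + ((sin g1)\<^sup>2 - x*(cos g1)\<^sup>2)*a1*b1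
      + ((cos g1)\<^sup>2 - x*(sin g1)\<^sup>2)*a2*b2 + x*a3*b3)/4"

lemma bloch_norm:
  assumes "(cmod (f 0))\<^sup>2 + (cmod (f 1))\<^sup>2 = 1"
  shows "(bl1 f)\<^sup>2 + (bl2 f)\<^sup>2 + (bl3 f)\<^sup>2 = 1"
proof -
  have "(Re (cnj (f 0) * f 1))\<^sup>2 + (Im (cnj (f 0) * f 1))\<^sup>2 = (cmod (cnj (f 0) * f 1))\<^sup>2"
    by (simp add: cmod_power2)
  also have "\<dots> = (cmod (f 0))\<^sup>2 * (cmod (f 1))\<^sup>2" by (simp add: norm_mult power_mult_distrib)
  finally have e: "(Re (cnj (f 0) * f 1))\<^sup>2 + (Im (cnj (f 0) * f 1))\<^sup>2 = (cmod (f 0))\<^sup>2 * (cmod (f 1))\<^sup>2" .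
  have "(bl1 f)\<^sup>2 + (bl2 f)\<^sup>2 + (bl3 f)\<^sup>2 = 4*((Re (cnj (f 0) * f 1))\<^sup>2 + (Im (cnj (f 0) * f 1))\<^sup>2) + (bl3 f)\<^sup>2"
  proof -
    have gen: "(2*u)\<^sup>2 + (2*v)\<^sup>2 = 4*(u\<^sup>2+v\<^sup>2)" for u v :: real by (simp add: power2_eq_square)
    show ?thesis unfolding bl1_def bl2_def by (simp only: gen)
  qed
  also have "\<dots> = ((cmod (f 0))\<^sup>2 + (cmod (f 1))\<^sup>2)\<^sup>2" unfolding e bl3_def by (simp add: power2_eq_square algebra_simps)
  finally show ?thesis using assms by simp
qed

lemma spec_g2:
  "pp g1 (pi/2-g1) x = sin g1 * cos g1 * (1+x)" "qq g1 (pi/2-g1) x = sin g1 * cos g1 * (1+x)"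
  "AA g1 (pi/2-g1) x = (sin g1)\<^sup>2 - x*(cos g1)\<^sup>2" "BB g1 (pi/2-g1) x = (cos g1)\<^sup>2 - x*(sin g1)\<^sup>2"
  unfolding pp_def qq_def AA_def BB_def by (simp_all add: cos_diff sin_diff power2_eq_square algebra_simps)

lemma val_bloch:
  assumes nf: "(cmod (f 0))\<^sup>2 + (cmod (f 1))\<^sup>2 = 1" and ng: "(cmod (g 0))\<^sup>2 + (cmod (g 1))\<^sup>2 = 1"
  shows "Re (mtrace (rho_x3 g1 (pi/2-g1) x * kron (proj f) (proj g))) =
     Fv g1 x (bl1 f) (bl2 f) (bl3 f) (bl1 g) (bl2 g) (bl3 g)"
proof -
  define P0 where "P0 = (cmod (f 0))\<^sup>2"
  define Q0 where "Q0 = (cmod (g 0))\<^sup>2"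
  have P1: "(cmod (f 1))\<^sup>2 = 1 - P0" using nf unfolding P0_def by simp
  have Q1: "(cmod (g 1))\<^sup>2 = 1 - Q0" using ng unfolding Q0_def by simp
  show ?thesis unfolding trace_val spec_g2 Fv_def bl1_def bl2_def bl3_def P1 Q1 P0_def[symmetric] Q0_def[symmetric]
    by (simp add: algebra_simps)
qed

lemma pure_proj:
  assumes "pure_qubit_state P"
  obtains f where "P = proj f" "(cmod (f 0))\<^sup>2 + (cmod (f 1))\<^sup>2 = 1"
proof -
  obtain \<psi> :: "complex vec" where "(\<Sum>i<2. (cmod (\<psi> $ i))\<^sup>2) = 1" "P = mat 2 2 (\<lambda>(i,j). \<psi> $ i * cnj (\<psi> $ j))"
    using assms unfolding pure_qubit_state_def by blast
  then show ?thesis using that[of "\<lambda>i. \<psi> $ i"] by (simp add: proj_def numeral_2_eq_2)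
qed

lemma proj_pure:
  assumes "(cmod (f 0))\<^sup>2 + (cmod (f 1))\<^sup>2 = 1"
  shows "pure_qubit_state (proj f)"
  unfolding pure_qubit_state_def
proof (intro exI[of _ "vec 2 f"] conjI)
  show "vec 2 f \<in> carrier_vec 2" by simp
  show "(\<Sum>i<2. (cmod (vec 2 f $ i))\<^sup>2) = 1" using assms by (simp add: numeral_2_eq_2)
  show "proj f = mat 2 2 (\<lambda>(i, j). vec 2 f $ i * cnj (vec 2 f $ j))"
    unfolding proj_def by (rule eq_matI) auto
qed

lemma abs_le1: "(a::real)\<^sup>2 \<le> 1 \<Longrightarrow> \<bar>a\<bar> \<le> 1"
  by (simp add: abs_square_le_1)

lemma tb: "\<bar>y::real\<bar> \<le> 1 \<Longrightarrow> k*y \<le> \<bar>k\<bar>"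
proof -
  assume "\<bar>y\<bar> \<le> 1"
  then have "\<bar>k\<bar>*\<bar>y\<bar> \<le> \<bar>k\<bar>" by (simp add: mult_left_le)
  moreover have "k*y \<le> \<bar>k\<bar>*\<bar>y\<bar>" by (metis abs_ge_self abs_mult)
  ultimately show ?thesis by linarith
qed

lemma Fv_crude:
  assumes "a1\<^sup>2+a2\<^sup>2+a3\<^sup>2 = 1" "b1\<^sup>2+b2\<^sup>2+b3\<^sup>2 = 1"
  shows "Fv g1 x a1 a2 a3 b1 b2 b3 \<le> (1 + 2*\<bar>sin g1 * cos g1 * (1+x)\<bar> + \<bar>(sin g1)\<^sup>2 - x*(cos g1)\<^sup>2\<bar>
      + \<bar>(cos g1)\<^sup>2 - x*(sin g1)\<^sup>2\<bar> + \<bar>x\<bar>)/4"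
proof -
  have "a1\<^sup>2 \<le> 1" "a2\<^sup>2 \<le> 1" "a3\<^sup>2 \<le> 1" "b1\<^sup>2 \<le> 1" "b2\<^sup>2 \<le> 1" "b3\<^sup>2 \<le> 1" using assms
    by (smt (verit) zero_le_power2)+
  then have ab: "\<bar>a1\<bar> \<le> 1" "\<bar>a2\<bar> \<le> 1" "\<bar>a3\<bar> \<le> 1" "\<bar>b1\<bar> \<le> 1" "\<bar>b2\<bar> \<le> 1" "\<bar>b3\<bar> \<le> 1"
    by (simp_all add: abs_le1)
  have p: "\<bar>u*v\<bar> \<le> 1" if "\<bar>u\<bar> \<le> 1" "\<bar>v\<bar> \<le> 1" for u v :: real
    using that by (simp add: abs_mult mult_le_one)
  have "\<bar>a3+b3\<bar> \<le> 2" using ab unfolding abs_le_iff by linarith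
  then have "\<bar>(a3+b3)/2\<bar> \<le> 1" by simp
  from tb[OF this, of "2*(sin g1 * cos g1 * (1+x))"]
  have 1: "(sin g1 * cos g1 * (1+x))*(a3+b3) \<le> 2*\<bar>sin g1 * cos g1 * (1+x)\<bar>" by (simp add: abs_mult)
  have 2: "((sin g1)\<^sup>2 - x*(cos g1)\<^sup>2)*a1*b1 \<le> \<bar>(sin g1)\<^sup>2 - x*(cos g1)\<^sup>2\<bar>"
    using tb[OF p[OF ab(1,4)]] by (simp add: mult.assoc)
  have 3: "((cos g1)\<^sup>2 - x*(sin g1)\<^sup>2)*a2*b2 \<le> \<bar>(cos g1)\<^sup>2 - x*(sin g1)\<^sup>2\<bar>"
    using tb[OF p[OF ab(2,5)]] by (simp add: mult.assoc)
  have 4: "x*a3*b3 \<le> \<bar>x\<bar>" using tb[OF p[OF ab(3,6)]] by (simp add: mult.assoc)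
  show ?thesis unfolding Fv_def by (rule divide_right_mono) (use 1 2 3 4 in linarith, simp)
qed

definition TT where "TT = {(P, Q). pure_qubit_state P \<and> pure_qubit_state Q}"

lemma e0_norm: "(cmod ((\<lambda>i::nat. if i = 0 then 1 else 0::complex) 0))\<^sup>2 + (cmod ((\<lambda>i::nat. if i = 0 then 1 else 0::complex) 1))\<^sup>2 = 1"
  by simp

lemma TT_ne: "TT \<noteq> {}"
  using proj_pure[OF e0_norm] unfolding TT_def by blast

lemma val_TT:
  assumes "PQ \<in> TT"
  obtains a1 a2 a3 b1 b2 b3 where "a1\<^sup>2+a2\<^sup>2+a3\<^sup>2 = 1" "b1\<^sup>2+b2\<^sup>2+b3\<^sup>2 = 1"
    "Re (mtrace (rho_x3 g1 (pi/2-g1) x * kron (fst PQ) (snd PQ))) = Fv g1 x a1 a2 a3 b1 b2 b3"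
proof -
  obtain P Q where PQ: "PQ = (P,Q)" "pure_qubit_state P" "pure_qubit_state Q" using assms unfolding TT_def by blast
  obtain f where f: "P = proj f" "(cmod (f 0))\<^sup>2 + (cmod (f 1))\<^sup>2 = 1" using pure_proj[OF PQ(2)] by blast
  obtain g where g: "Q = proj g" "(cmod (g 0))\<^sup>2 + (cmod (g 1))\<^sup>2 = 1" using pure_proj[OF PQ(3)] by blast
  show ?thesis
    using that[OF bloch_norm[OF f(2)] bloch_norm[OF g(2)]] val_bloch[OF f(2) g(2)] PQ f g by simp
qed

lemma gmax_alt: "gmax \<rho> = (SUP PQ \<in> TT. Re (mtrace (\<rho> * kron (fst PQ) (snd PQ))))"
  unfolding gmax_def TT_def by simp

lemma bdd: "bdd_above ((\<lambda>PQ. Re (mtrace (rho_x3 g1 (pi/2-g1) x * kron (fst PQ) (snd PQ)))) ` TT)"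
proof (rule bdd_aboveI2)
  fix PQ assume "PQ \<in> TT"
  then obtain a1 a2 a3 b1 b2 b3 where "a1\<^sup>2+a2\<^sup>2+a3\<^sup>2 = 1" "b1\<^sup>2+b2\<^sup>2+b3\<^sup>2 = 1"
    "Re (mtrace (rho_x3 g1 (pi/2-g1) x * kron (fst PQ) (snd PQ))) = Fv g1 x a1 a2 a3 b1 b2 b3"
    by (rule val_TT)
  then show "Re (mtrace (rho_x3 g1 (pi/2-g1) x * kron (fst PQ) (snd PQ))) \<le> (1 + 2*\<bar>sin g1 * cos g1 * (1+x)\<bar> + \<bar>(sin g1)\<^sup>2 - x*(cos g1)\<^sup>2\<bar>
      + \<bar>(cos g1)\<^sup>2 - x*(sin g1)\<^sup>2\<bar> + \<bar>x\<bar>)/4" using Fv_crude by simp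
qed

lemma gmax_le:
  assumes "\<And>a1 a2 a3 b1 b2 b3. a1\<^sup>2+a2\<^sup>2+a3\<^sup>2 = 1 \<Longrightarrow> b1\<^sup>2+b2\<^sup>2+b3\<^sup>2 = 1 \<Longrightarrow> Fv g1 x a1 a2 a3 b1 b2 b3 \<le> U"
  shows "gmax (rho_x3 g1 (pi/2-g1) x) \<le> U"
  unfolding gmax_alt
proof (rule cSUP_least[OF TT_ne])
  fix PQ assume "PQ \<in> TT"
  then obtain a1 a2 a3 b1 b2 b3 where "a1\<^sup>2+a2\<^sup>2+a3\<^sup>2 = 1" "b1\<^sup>2+b2\<^sup>2+b3\<^sup>2 = 1"
    "Re (mtrace (rho_x3 g1 (pi/2-g1) x * kron (fst PQ) (snd PQ))) = Fv g1 x a1 a2 a3 b1 b2 b3"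
    by (rule val_TT)
  then show "Re (mtrace (rho_x3 g1 (pi/2-g1) x * kron (fst PQ) (snd PQ))) \<le> U" using assms by simp
qed

lemma gmax_ge:
  assumes "(cmod (f 0))\<^sup>2 + (cmod (f 1))\<^sup>2 = 1"
  shows "Fv g1 x (bl1 f) (bl2 f) (bl3 f) (bl1 f) (bl2 f) (bl3 f) \<le> gmax (rho_x3 g1 (pi/2-g1) x)"
proof -
  have "(proj f, proj f) \<in> TT" using proj_pure[OF assms] unfolding TT_def by simp
  from cSUP_upper[OF this bdd[of g1 x]]
  show ?thesis unfolding gmax_alt using val_bloch[OF assms assms] by simp
qed

definition wf :: "real \<Rightarrow> nat \<Rightarrow> complex" where
  "wf t = (\<lambda>i. if i = 0 then complex_of_real (sqrt ((1+t)/2)) else complex_of_real (sqrt ((1-t)/2)))"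

lemma wf_props:
  assumes "-1 \<le> t" "t \<le> 1"
  shows "(cmod (wf t 0))\<^sup>2 + (cmod (wf t 1))\<^sup>2 = 1" "bl2 (wf t) = 0" "bl3 (wf t) = t"
    "bl1 (wf t) * bl1 (wf t) = 1 - t\<^sup>2"
proof -
  have a: "0 \<le> (1+t)/2" "0 \<le> (1-t)/2" using assms by auto
  have c0: "(cmod (wf t 0))\<^sup>2 = (1+t)/2" unfolding wf_def using a by simp
  have c1: "(cmod (wf t 1))\<^sup>2 = (1-t)/2" unfolding wf_def using a by simp
  show "(cmod (wf t 0))\<^sup>2 + (cmod (wf t 1))\<^sup>2 = 1" unfolding c0 c1 by (simp add: field_simps)
  show "bl3 (wf t) = t" unfolding bl3_def c0 c1 by (simp add: field_simps)
  show "bl2 (wf t) = 0" unfolding bl2_def wf_def by simp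
  have "bl1 (wf t) = 2 * (sqrt ((1+t)/2) * sqrt ((1-t)/2))" unfolding bl1_def wf_def by simp
  then have "bl1 (wf t) * bl1 (wf t) = 4 * ((sqrt ((1+t)/2))\<^sup>2 * (sqrt ((1-t)/2))\<^sup>2)"
    by (simp add: power2_eq_square algebra_simps)
  also have "\<dots> = 1 - t\<^sup>2" using a by (simp add: power2_eq_square field_simps)
  finally show "bl1 (wf t) * bl1 (wf t) = 1 - t\<^sup>2" .
qed


lemma Fv_wit:
  assumes "-1 \<le> t" "t \<le> 1"
  shows "Fv g1 x (bl1 (wf t)) (bl2 (wf t)) (bl3 (wf t)) (bl1 (wf t)) (bl2 (wf t)) (bl3 (wf t)) =
    (1 + 2*(sin g1 * cos g1 * (1+x))*t + ((sin g1)\<^sup>2 - x*(cos g1)\<^sup>2)*(1-t\<^sup>2) + x*t\<^sup>2)/4"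
  unfolding Fv_def wf_props[OF assms] mult.assoc[symmetric]
  by (simp add: mult.assoc wf_props(4)[OF assms] power2_eq_square algebra_simps)

lemma g1_facts:
  assumes "g1 \<in> {pi/4 .. pi/2}"
  shows "sc (sin g1) (cos g1) (sqrt 2)"
proof
  have g: "pi/4 \<le> g1" "g1 \<le> pi/2" using assms by auto
  have "sin (pi/4) \<le> sin g1" using g sin_mono_le_eq[of "pi/4" g1] pi_gt_zero by auto
  then have sg: "sqrt 2 / 2 \<le> sin g1" by (simp add: sin_45)
  have r0: "0 < sqrt (2::real)" by simp
  show "(sin g1)\<^sup>2 + (cos g1)\<^sup>2 = 1" by simp
  show "(sqrt 2)\<^sup>2 = (2::real)" by simp
  show "0 < sqrt (2::real)" by simp
  show "0 < sin g1" using sg r0 by linarith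
  show "sin g1 \<le> 1" by simp
  show "0 \<le> cos g1" using g pi_gt_zero by (intro cos_ge_zero) auto
  have "(sqrt 2 / 2)\<^sup>2 \<le> (sin g1)\<^sup>2" using sg r0 by (intro power_mono) auto
  then show "1 \<le> 2 * (sin g1)\<^sup>2" by (simp add: power_divide)
qed

lemma h_mono:
  fixes s1 s2 r :: real
  assumes "r\<^sup>2 = 2" "0 < r" "0 < s1" "s1 < s2" "s2 \<le> 1"
  shows "(2 - 2*s1\<^sup>2 + r*s1)/(4 - 2*s1\<^sup>2) < (2 - 2*s2\<^sup>2 + r*s2)/(4 - 2*s2\<^sup>2)"
proof -
  have r1: "1 < r"
  proof (rule ccontr)
    assume "\<not> 1 < r" then have "r*r \<le> 1" using assms by (simp add: mult_le_one)
    then show False using assms by (simp add: power2_eq_square)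
  qed
  have s1: "s1*s1 \<le> 1" "s2*s2 \<le> 1" using assms by (simp_all add: mult_le_one)
  have d1: "0 < 4 - 2*s1\<^sup>2" "0 < 4 - 2*s2\<^sup>2" using s1 by (simp_all add: power2_eq_square)
  have rr: "r*r = 2" using assms(1) by (simp add: power2_eq_square)
  have key0: "(2 - 2*s2*s2 + r*s2)*(4 - 2*s1*s1) - (2 - 2*s1*s1 + r*s1)*(4 - 2*s2*s2)
      = (s2 - s1)*(2*r)*((r - s1)*(r - s2))"
  proof -
    have "(s2 - s1)*(2*r)*((r - s1)*(r - s2)) = (s2 - s1)*(2*(r*r)*r - 2*(r*r)*(s1+s2) + 2*r*s1*s2)"
      by (simp add: algebra_simps)
    also have "\<dots> = (s2 - s1)*(4*r - 4*(s1+s2) + 2*r*s1*s2)" using rr by simp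
    finally show ?thesis by (simp add: algebra_simps)
  qed
  have key: "(2 - 2*s2\<^sup>2 + r*s2)*(4 - 2*s1\<^sup>2) - (2 - 2*s1\<^sup>2 + r*s1)*(4 - 2*s2\<^sup>2)
      = (s2 - s1)*(2*r)*((r - s1)*(r - s2))" using key0 by (simp add: power2_eq_square mult.assoc)
  have "0 < (s2 - s1)*(2*r)*((r - s1)*(r - s2))" using assms r1 by (intro mult_pos_pos) auto
  then have "(2 - 2*s1\<^sup>2 + r*s1)*(4 - 2*s2\<^sup>2) < (2 - 2*s2\<^sup>2 + r*s2)*(4 - 2*s1\<^sup>2)" using key by linarith
  then show ?thesis using d1 by (simp add: divide_less_eq less_divide_eq field_simps)
qed

theorem mainTheorem4:
  shows "(\<forall>g1 \<in> {pi/4 .. pi/2}.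
           let g2 = pi/2 - g1;
               V = (1 + cos (2*g1) + sqrt 2 * sin g1)\<^sup>2 / (3 + cos (2*g1))\<^sup>2;
               xs = 2 * sin g1 * (sin g1 - sqrt 2) / (3 + cos (2*g1))
           in xs \<in> {-1 .. 1} \<and> gmax (rho_x3 g1 g2 xs) = V \<and>
              (\<forall>x3 \<in> {-1 .. 1}. V \<le> gmax (rho_x3 g1 g2 x3)))
       \<and> strict_mono_on {pi/4 .. pi/2}
           (\<lambda>g1. (1 + cos (2*g1) + sqrt 2 * sin g1)\<^sup>2 / (3 + cos (2*g1))\<^sup>2)
       \<and> (1 + cos (2*(pi/4)) + sqrt 2 * sin (pi/4))\<^sup>2 / (3 + cos (2*(pi/4)))\<^sup>2 = 4/9
       \<and> 2 * sin (pi/4) * (sin (pi/4) - sqrt 2) / (3 + cos (2*(pi/4))) = -1/3"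
proof (intro conjI)
  show "\<forall>g1 \<in> {pi/4 .. pi/2}.
           let g2 = pi/2 - g1;
               V = (1 + cos (2*g1) + sqrt 2 * sin g1)\<^sup>2 / (3 + cos (2*g1))\<^sup>2;
               xs = 2 * sin g1 * (sin g1 - sqrt 2) / (3 + cos (2*g1))
           in xs \<in> {-1 .. 1} \<and> gmax (rho_x3 g1 g2 xs) = V \<and>
              (\<forall>x3 \<in> {-1 .. 1}. V \<le> gmax (rho_x3 g1 g2 x3))"
  proof
    fix g1 :: real assume g1: "g1 \<in> {pi/4 .. pi/2}"
    interpret S: sc "sin g1" "cos g1" "sqrt 2" by (rule g1_facts[OF g1])
    have cos2: "cos (2*g1) = 1 - 2*(sin g1)\<^sup>2" by (simp add: cos_double_sin)
    have Veq: "(1 + cos (2*g1) + sqrt 2 * sin g1)\<^sup>2 / (3 + cos (2*g1))\<^sup>2 = S.V"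
      unfolding S.V_def cos2 by (simp add: algebra_simps)
    have xeq: "2 * sin g1 * (sin g1 - sqrt 2) / (3 + cos (2*g1)) = S.xs"
      unfolding S.xs_def cos2 by (simp add: algebra_simps)
    have tt: "-1 \<le> S.tt" "S.tt \<le> 1" using S.tt_range by auto
    have lower: "S.V \<le> gmax (rho_x3 g1 (pi/2 - g1) x)" for x
    proof -
      have "S.V = Fv g1 x (bl1 (wf S.tt)) (bl2 (wf S.tt)) (bl3 (wf S.tt)) (bl1 (wf S.tt)) (bl2 (wf S.tt)) (bl3 (wf S.tt))"
        unfolding Fv_wit[OF tt] using S.witness_val[of x] by simp
      also have "\<dots> \<le> gmax (rho_x3 g1 (pi/2 - g1) x)" by (rule gmax_ge[OF wf_props(1)[OF tt]])
      finally show ?thesis .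
    qed
    have xr: "-1 \<le> S.xs" "S.xs \<le> 1" using S.xs_range by auto
    have upper: "gmax (rho_x3 g1 (pi/2 - g1) S.xs) \<le> S.V"
    proof (rule gmax_le)
      fix a1 a2 a3 b1 b2 b3 :: real
      assume a: "a1\<^sup>2+a2\<^sup>2+a3\<^sup>2 = 1" and b: "b1\<^sup>2+b2\<^sup>2+b3\<^sup>2 = 1"
      let ?m = "sin g1 * cos g1 * (1+S.xs)"
      let ?A = "(sin g1)\<^sup>2 - S.xs*(cos g1)\<^sup>2"
      let ?B = "(cos g1)\<^sup>2 - S.xs*(sin g1)\<^sup>2"
      have c: "?B \<le> ?A" "0 \<le> ?A + ?B" "0 \<le> ?A + S.xs" using S.conds[OF xr] by auto
      have am: "?A - S.xs = sqrt 2 * sin g1" using S.A_minus by simp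
      have "0 < sqrt 2 * sin g1" using S.h3 S.h4 by simp
      then have c4: "0 < ?A - S.xs" using am by simp
      have "a1\<^sup>2+a2\<^sup>2+a3\<^sup>2+b1\<^sup>2+b2\<^sup>2+b3\<^sup>2 = 2" using a b by simp
      from bound[OF this c c4, of ?m]
      have "?m*(a3+b3) + ?A*a1*b1 + ?B*a2*b2 + S.xs*a3*b3 \<le> ?A + ?m\<^sup>2/(sqrt 2 * sin g1)"
        unfolding am .
      then have "1 + ?m*(a3+b3) + ?A*a1*b1 + ?B*a2*b2 + S.xs*a3*b3 \<le> 4*S.V"
        using S.K_eq by linarith
      then show "Fv g1 S.xs a1 a2 a3 b1 b2 b3 \<le> S.V" unfolding Fv_def by simp
    qed
    show "let g2 = pi/2 - g1;
               V = (1 + cos (2*g1) + sqrt 2 * sin g1)\<^sup>2 / (3 + cos (2*g1))\<^sup>2;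
               xs = 2 * sin g1 * (sin g1 - sqrt 2) / (3 + cos (2*g1))
           in xs \<in> {-1 .. 1} \<and> gmax (rho_x3 g1 g2 xs) = V \<and>
              (\<forall>x3 \<in> {-1 .. 1}. V \<le> gmax (rho_x3 g1 g2 x3))"
      unfolding Let_def Veq xeq using xr upper lower[of S.xs] lower by (auto intro: antisym)
  qed
next
  show "strict_mono_on {pi/4 .. pi/2}
           (\<lambda>g1. (1 + cos (2*g1) + sqrt 2 * sin g1)\<^sup>2 / (3 + cos (2*g1))\<^sup>2)"
  proof (rule strict_mono_onI)
    fix a b :: real assume a: "a \<in> {pi/4 .. pi/2}" and b: "b \<in> {pi/4 .. pi/2}" and ab: "a < b"
    interpret A: sc "sin a" "cos a" "sqrt 2" by (rule g1_facts[OF a])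
    have sab: "sin a < sin b" using a b ab sin_mono_less_eq[of a b] pi_gt_zero by auto
    have e: "(1 + cos (2*g) + sqrt 2 * sin g)\<^sup>2 / (3 + cos (2*g))\<^sup>2
        = ((2 - 2*(sin g)\<^sup>2 + sqrt 2 * sin g)/(4 - 2*(sin g)\<^sup>2))\<^sup>2" for g
      unfolding cos_double_sin by (simp add: power_divide algebra_simps)
    have h: "(2 - 2*(sin a)\<^sup>2 + sqrt 2 * sin a)/(4 - 2*(sin a)\<^sup>2) < (2 - 2*(sin b)\<^sup>2 + sqrt 2 * sin b)/(4 - 2*(sin b)\<^sup>2)"
      by (rule h_mono) (use A.h4 sab in auto)
    have p: "0 \<le> (2 - 2*(sin a)\<^sup>2 + sqrt 2 * sin a)/(4 - 2*(sin a)\<^sup>2)"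
    proof -
      have "(sin a)\<^sup>2 \<le> 1" by (simp add: abs_square_le_1)
      moreover have "0 \<le> sqrt 2 * sin a" using A.h4 by simp
      ultimately show ?thesis by (intro divide_nonneg_nonneg) auto
    qed
    show "(1 + cos (2*a) + sqrt 2 * sin a)\<^sup>2 / (3 + cos (2*a))\<^sup>2 < (1 + cos (2*b) + sqrt 2 * sin b)\<^sup>2 / (3 + cos (2*b))\<^sup>2"
      unfolding e using power_strict_mono[OF h p, of 2] by simp
  qed
next
  have c: "cos (2*(pi/4)) = 0" by simp
  have r: "sqrt 2 * sqrt 2 = (2::real)" by simp
  show "(1 + cos (2*(pi/4)) + sqrt 2 * sin (pi/4))\<^sup>2 / (3 + cos (2*(pi/4)))\<^sup>2 = 4/9"
    unfolding c sin_45 by (simp add: power2_eq_square)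
  show "2 * sin (pi/4) * (sin (pi/4) - sqrt 2) / (3 + cos (2*(pi/4))) = -1/3"
    unfolding c sin_45 by (simp add: algebra_simps)
qed

end
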